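(* In the setting described in the context, the elements $$\overline{w\,g(i,\varepsilon,\sigma)},$$ where $q_i\varepsilon\sigma\to q_jT_\alpha T_\beta$ ranges over the commands of $M$ (so $1\le i\le n$, $\varepsilon,\sigma\in\{0,1\}$) and $w$ ranges over $V_{\varepsilon\sigma}$, are linearly independent over $\Phi$.
   Context: $\Phi$ is a commutative ring with unity $1\ne0$, regarded as a differential ring with the commuting derivations $\delta_1,\delta_2$ acting as zero. $M$ is a two-tape acyclic Minsky machine with states $q_0,\ldots,q_n$ ($q_0$ terminal). Minsky machine conventions: two tapes infinite to the right with cells $0,1,2,\ldots$; cell $0$ contains $1$, all others $0$; a configuration $[i,a,b]$ means state $q_i$, head at cell $a$ of tape 1 and cell $b$ of tape 2. Commands are $q_i\varepsilon\sigma\to q_jT_\alpha T_\beta$ with $1\le i\le n$, $0\le j\le n$, $\varepsilon,\sigma\in\{0,1\}$, $\alpha,\beta\in\{-1,0,1\}$, $\alpha\ge0$ if $\varepsilon=1$, $\beta\ge0$ if $\sigma=1$, at most one per triple $(i,\varepsilon,\sigma)$; such a command applies to $[i,a,b]$ when ($\varepsilon=1$ iff $a=0$) and ($\sigma=1$ iff $b=0$), producing $[j,a+\alpha,b+\beta]$. Acyclic means no configuration recurs after a positive number of steps. $A=\Phi\{x_1,x_2,q_0,\ldots,q_n\}$ is the differential polynomial ring w.r.t. $\delta_1,\delta_2$. $J$ is the differential ideal generated by $\delta_1(x_2),\delta_2(x_1)$, and $B=A/J$; $B$ is the polynomial ring over $\Phi$ in the variables $\delta_1^i(x_1)$, $\delta_2^i(x_2)$,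 $\delta_1^i\delta_2^j(q_k)$ ($i,j\ge0$), with induced derivations ($\delta_2\delta_1^i(x_1)=0$, $\delta_1\delta_2^i(x_2)=0$). For each command, $g(i,\varepsilon,\sigma)$ is the image in $B$ of $x_1^{\varepsilon}x_2^{\sigma}\delta_1^{1-\varepsilon}\delta_2^{1-\sigma}(q_i)-x_1^{\varepsilon}x_2^{\sigma}\delta_1^{1-\varepsilon+\alpha}\delta_2^{1-\sigma+\beta}(q_j)$. $B^e$ is the ring which is the free left $B$-module on the basis $\{\delta_1^i\delta_2^j\}$ with $\delta_l$ commuting and $\delta_l b=b\delta_l+\delta_l(b)$; $B$ is a left $B^e$-module. $V_{\varepsilon\sigma}$ is the set of elements $(\delta_1^a(x_1))^{1-\varepsilon}(\delta_2^b(x_2))^{1-\sigma}\delta_1^s\delta_2^t\in B^e$ with $a,b,s,t\ge0$. Polynomial degree functions on $B$: $\deg_1(\delta_1^i(x_1))=i+1$, $\deg_1=0$ on other variables; $\deg_2(\delta_2^j(x_2))=j+1$, $\deg_2=0$ on other variables. For a monomial $v$, $\mathrm{Deg}(v)=(\deg_1 v,\deg_2 v)\in\mathbb{N}^2$ ordered lexicographically; for $h\in B$, $\overline{h}$ is the sum of the terms of $h$ of maximal $\mathrm{Deg}$. *)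

theory Defs
  imports Main "HOL-Library.Poly_Mapping" "HOL-Library.Product_Lexorder"
begin

text \<open>Variables of B: X1 i = delta1^i(x1), X2 i = delta2^i(x2),
  Q k i j = delta1^i delta2^j (q_k).\<close>
datatype var = X1 nat | X2 nat | Q nat nat nat

type_synonym 'a B = "(var \<Rightarrow>\<^sub>0 nat) \<Rightarrow>\<^sub>0 'a"

definition Bvar :: "var \<Rightarrow> 'a::comm_ring_1 B" where
  "Bvar v = Poly_Mapping.single (Poly_Mapping.single v 1) 1"

definition smul :: "'a::comm_ring_1 \<Rightarrow> 'a B \<Rightarrow> 'a B" where
  "smul c p = Poly_Mapping.map (\<lambda>x. c * x) p"

text \<open>The unique derivation of B (over the coefficient ring) sending each variable v to D v.\<close>
definition der :: "(var \<Rightarrow> 'a::comm_ring_1 B) \<Rightarrow> 'a B \<Rightarrow> 'a B" where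
  "der D p = (\<Sum>m\<in>Poly_Mapping.keys p. \<Sum>v\<in>Poly_Mapping.keys (m :: var \<Rightarrow>\<^sub>0 nat).
      Poly_Mapping.single (m - Poly_Mapping.single v 1) (Poly_Mapping.lookup p m * of_nat (Poly_Mapping.lookup m v)) * D v)"

fun d1var :: "var \<Rightarrow> 'a::comm_ring_1 B" where
  "d1var (X1 i) = Bvar (X1 (Suc i))"
| "d1var (X2 i) = 0"
| "d1var (Q k i j) = Bvar (Q k (Suc i) j)"

fun d2var :: "var \<Rightarrow> 'a::comm_ring_1 B" where
  "d2var (X1 i) = 0"
| "d2var (X2 i) = Bvar (X2 (Suc i))"
| "d2var (Q k i j) = Bvar (Q k i (Suc j))"

definition delta1 :: "'a::comm_ring_1 B \<Rightarrow> 'a B" where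
  "delta1 = der d1var"

definition delta2 :: "'a::comm_ring_1 B \<Rightarrow> 'a B" where
  "delta2 = der d2var"

text \<open>A two-tape Minsky machine with states q_0..q_n is given by n and a partial
  function cmd: cmd i e s = Some (j, alpha, beta) encodes the command
  q_i e s -> q_j T_alpha T_beta (at most one per triple automatically).\<close>
definition minsky_wf :: "nat \<Rightarrow> (nat \<Rightarrow> nat \<Rightarrow> nat \<Rightarrow> (nat \<times> int \<times> int) option) \<Rightarrow> bool" where
  "minsky_wf n cmd \<longleftrightarrow> (\<forall>i e s j al be. cmd i e s = Some (j, al, be) \<longrightarrow>
      1 \<le> i \<and> i \<le> n \<and> e \<le> 1 \<and> s \<le> 1 \<and> j \<le> n \<and>
      al \<in> {-1, 0, 1} \<and> be \<in> {-1, 0, 1} \<and>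
      (e = 1 \<longrightarrow> al \<ge> 0) \<and> (s = 1 \<longrightarrow> be \<ge> 0))"

text \<open>One step on configurations (state, head position tape 1, head position tape 2).\<close>
definition minsky_step :: "(nat \<Rightarrow> nat \<Rightarrow> nat \<Rightarrow> (nat \<times> int \<times> int) option) \<Rightarrow> ((nat \<times> nat \<times> nat) \<times> (nat \<times> nat \<times> nat)) set" where
  "minsky_step cmd = {((i, a, b), (j, a', b')). \<exists>al be.
      cmd i (if a = 0 then 1 else 0) (if b = 0 then 1 else 0) = Some (j, al, be) \<and>
      int a' = int a + al \<and> int b' = int b + be}"

definition minsky_acyclic :: "(nat \<Rightarrow> nat \<Rightarrow> nat \<Rightarrow> (nat \<times> int \<times> int) option) \<Rightarrow> bool" where
  "minsky_acyclic cmd \<longleftrightarrow> (\<forall>c. (c, c) \<notin> (minsky_step cmd)\<^sup>+)"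

definition gcmd :: "nat \<Rightarrow> nat \<Rightarrow> nat \<Rightarrow> nat \<Rightarrow> int \<Rightarrow> int \<Rightarrow> 'a::comm_ring_1 B" where
  "gcmd i e s j al be =
     Bvar (X1 0) ^ e * Bvar (X2 0) ^ s * Bvar (Q i (1 - e) (1 - s))
   - Bvar (X1 0) ^ e * Bvar (X2 0) ^ s *
       Bvar (Q j (nat (int (1 - e) + al)) (nat (int (1 - s) + be)))"

text \<open>Action on B of the element (delta1^a x1)^(1-e) (delta2^b x2)^(1-s) delta1^s1 delta2^t of B^e.\<close>
definition actV :: "nat \<Rightarrow> nat \<Rightarrow> nat \<Rightarrow> nat \<Rightarrow> nat \<Rightarrow> nat \<Rightarrow> 'a::comm_ring_1 B \<Rightarrow> 'a B" where
  "actV e s a b s1 t h =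
     Bvar (X1 a) ^ (1 - e) * Bvar (X2 b) ^ (1 - s) * (delta1 ^^ s1) ((delta2 ^^ t) h)"

definition deg1 :: "(var \<Rightarrow>\<^sub>0 nat) \<Rightarrow> nat" where
  "deg1 m = (\<Sum>v\<in>Poly_Mapping.keys m. (case v of X1 i \<Rightarrow> (i + 1) * Poly_Mapping.lookup m v | _ \<Rightarrow> 0))"

definition deg2 :: "(var \<Rightarrow>\<^sub>0 nat) \<Rightarrow> nat" where
  "deg2 m = (\<Sum>v\<in>Poly_Mapping.keys m. (case v of X2 j \<Rightarrow> (j + 1) * Poly_Mapping.lookup m v | _ \<Rightarrow> 0))"

text \<open>Deg, compared lexicographically (Product_Lexorder).\<close>
definition Deg :: "(var \<Rightarrow>\<^sub>0 nat) \<Rightarrow> nat \<times> nat" where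
  "Deg m = (deg1 m, deg2 m)"

text \<open>Sum of the terms of maximal Deg (0 for h = 0).\<close>
definition lead :: "'a::comm_ring_1 B \<Rightarrow> 'a B" where
  "lead h = Poly_Mapping.mapp (\<lambda>m c. if Deg m = Max (Deg ` Poly_Mapping.keys h) then c else 0) h"

definition lin_indep_family :: "'i set \<Rightarrow> ('i \<Rightarrow> 'a::comm_ring_1 B) \<Rightarrow> bool" where
  "lin_indep_family I f \<longleftrightarrow> (\<forall>c :: 'i \<Rightarrow> 'a. finite {k. c k \<noteq> 0} \<longrightarrow> {k. c k \<noteq> 0} \<subseteq> I \<longrightarrow>
      (\<Sum>k\<in>{k. c k \<noteq> 0}. smul (c k) (f k)) = 0 \<longrightarrow> (\<forall>k. c k = 0))"

end

theory Submission
  imports Defs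
begin


definition dmon :: "(var \<Rightarrow> 'a::comm_ring_1 B) \<Rightarrow> (var \<Rightarrow>\<^sub>0 nat) \<Rightarrow> 'a \<Rightarrow> 'a B" where
  "dmon D m c = (\<Sum>v\<in>Poly_Mapping.keys m.
      Poly_Mapping.single (m - Poly_Mapping.single v 1) (c * of_nat (Poly_Mapping.lookup m v)) * D v)"

lemma dmon_zero[simp]: "dmon D m 0 = 0"
  by (simp add: dmon_def)

lemma dmon_add: "dmon D m (a + b) = dmon D m a + dmon D m b"
  by (simp add: dmon_def distrib_right single_add sum.distrib)

lemma der_alt:
  assumes "finite A" "Poly_Mapping.keys p \<subseteq> A"
  shows "der D p = (\<Sum>m\<in>A. dmon D m (Poly_Mapping.lookup p m))"
proof -
  have "der D p = (\<Sum>m\<in>Poly_Mapping.keys p. dmon D m (Poly_Mapping.lookup p m))"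
    by (simp add: der_def dmon_def)
  also have "\<dots> = (\<Sum>m\<in>A. dmon D m (Poly_Mapping.lookup p m))"
    by (rule sum.mono_neutral_left) (use assms in \<open>auto simp: in_keys_iff\<close>)
  finally show ?thesis .
qed

lemma der_add: "der D (p + q) = der D p + der D q"
proof -
  let ?A = "Poly_Mapping.keys p \<union> Poly_Mapping.keys q"
  have f: "finite ?A" by simp
  have "der D (p + q) = (\<Sum>m\<in>?A. dmon D m (Poly_Mapping.lookup (p+q) m))"
    by (rule der_alt[OF f]) (rule keys_add)
  also have "\<dots> = (\<Sum>m\<in>?A. dmon D m (Poly_Mapping.lookup p m)) + (\<Sum>m\<in>?A. dmon D m (Poly_Mapping.lookup q m))"
    by (simp add: lookup_add dmon_add sum.distrib)
  also have "\<dots> = der D p + der D q"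
  proof -
    have dp: "der D p = (\<Sum>m\<in>?A. dmon D m (Poly_Mapping.lookup p m))"
      by (rule der_alt[OF f]) blast
    have dq: "der D q = (\<Sum>m\<in>?A. dmon D m (Poly_Mapping.lookup q m))"
      by (rule der_alt[OF f]) blast
    show ?thesis by (simp only: dp dq)
  qed
  finally show ?thesis .
qed

lemma der_zero[simp]: "der D 0 = 0"
  by (simp add: der_def)

lemma der_diff: "der D (p - q) = der D p - der D q"
  using der_add[of D "p - q" q] by (simp add: algebra_simps)

lemma der_single: "der D (Poly_Mapping.single m c) = dmon D m c"
  by (simp add: der_def dmon_def)

lemma keys_der: "Poly_Mapping.keys (der D p) \<subseteq> (\<Union>m\<in>Poly_Mapping.keys p. Poly_Mapping.keys (dmon D m (Poly_Mapping.lookup p m)))"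
proof -
  have "der D p = (\<Sum>m\<in>Poly_Mapping.keys p. dmon D m (Poly_Mapping.lookup p m))"
    by (simp add: der_def dmon_def)
  then show ?thesis by (simp only: keys_sum)
qed

lemma dmon_superset:
  assumes "finite A" "Poly_Mapping.keys m \<subseteq> A"
  shows "dmon D m c = (\<Sum>v\<in>A.
      Poly_Mapping.single (m - Poly_Mapping.single v 1) (c * of_nat (Poly_Mapping.lookup m v)) * D v)"
  unfolding dmon_def
  by (rule sum.mono_neutral_left) (use assms in \<open>auto simp: in_keys_iff\<close>)

definition mon :: "nat \<Rightarrow> nat \<Rightarrow> nat \<Rightarrow> nat \<Rightarrow> nat \<Rightarrow> nat \<Rightarrow> nat \<Rightarrow> var \<Rightarrow>\<^sub>0 nat" where
  "mon e s k l i p r = Poly_Mapping.single (X1 k) e + Poly_Mapping.single (X2 l) s + Poly_Mapping.single (Q i p r) 1"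

lemma keys_mon: "Poly_Mapping.keys (mon e s k l i p r) \<subseteq> {X1 k, X2 l, Q i p r}"
  by (auto simp: mon_def in_keys_iff lookup_add lookup_single when_def split: if_splits)

lemma lookup_mon_X1[simp]: "Poly_Mapping.lookup (mon e s k l i p r) (X1 k) = e"
  by (simp add: mon_def lookup_add lookup_single)
lemma lookup_mon_X2[simp]: "Poly_Mapping.lookup (mon e s k l i p r) (X2 l) = s"
  by (simp add: mon_def lookup_add lookup_single)
lemma lookup_mon_Q[simp]: "Poly_Mapping.lookup (mon e s k l i p r) (Q i p r) = 1"
  by (simp add: mon_def lookup_add lookup_single)

lemma Bvar_mult: "Poly_Mapping.single m c * Bvar v = Poly_Mapping.single (m + Poly_Mapping.single v 1) c"
  by (simp add: Bvar_def mult_single)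

lemma mon_X1_shift: "mon 1 s k l i p r - Poly_Mapping.single (X1 k) 1 + Poly_Mapping.single (X1 (Suc k)) 1 = mon 1 s (Suc k) l i p r"
  by (rule poly_mapping_eqI) (simp add: mon_def lookup_add lookup_minus lookup_single when_def)
lemma mon_X2_shift: "mon e 1 k l i p r - Poly_Mapping.single (X2 l) 1 + Poly_Mapping.single (X2 (Suc l)) 1 = mon e 1 k (Suc l) i p r"
  by (rule poly_mapping_eqI) (simp add: mon_def lookup_add lookup_minus lookup_single when_def)
lemma mon_Q1_shift: "mon e s k l i p r - Poly_Mapping.single (Q i p r) 1 + Poly_Mapping.single (Q i (Suc p) r) 1 = mon e s k l i (Suc p) r"
  by (rule poly_mapping_eqI) (simp add: mon_def lookup_add lookup_minus lookup_single when_def)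
lemma mon_Q2_shift: "mon e s k l i p r - Poly_Mapping.single (Q i p r) 1 + Poly_Mapping.single (Q i p (Suc r)) 1 = mon e s k l i p (Suc r)"
  by (rule poly_mapping_eqI) (simp add: mon_def lookup_add lookup_minus lookup_single when_def)

lemma d1_mon:
  assumes "e \<le> 1" "s \<le> 1"
  shows "delta1 (Poly_Mapping.single (mon e s k l i p r) c) =
    (if e = 1 then Poly_Mapping.single (mon e s (Suc k) l i p r) c else 0) + Poly_Mapping.single (mon e s k l i (Suc p) r) c" (is "_ = ?rhs")
proof -
  have "delta1 (Poly_Mapping.single (mon e s k l i p r) c) = dmon d1var (mon e s k l i p r) c"
    by (simp add: delta1_def der_single)
  also have "\<dots> = (\<Sum>v\<in>{X1 k, X2 l, Q i p r}.
      Poly_Mapping.single (mon e s k l i p r - Poly_Mapping.single v 1) (c * of_nat (Poly_Mapping.lookup (mon e s k l i p r) v)) * d1var v)"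
    by (rule dmon_superset) (use keys_mon in auto)
  also have "\<dots> = ?rhs"
  proof -
    consider "e = 0" | "e = 1" using assms by linarith
    then show ?thesis using mon_X1_shift[of s k l i p r] mon_Q1_shift[of e s k l i p r]
      by cases (auto simp: Bvar_mult)
  qed
  finally show ?thesis .
qed

lemma d2_mon:
  assumes "e \<le> 1" "s \<le> 1"
  shows "delta2 (Poly_Mapping.single (mon e s k l i p r) c) =
    (if s = 1 then Poly_Mapping.single (mon e s k (Suc l) i p r) c else 0) + Poly_Mapping.single (mon e s k l i p (Suc r)) c" (is "_ = ?rhs")
proof -
  have "delta2 (Poly_Mapping.single (mon e s k l i p r) c) = dmon d2var (mon e s k l i p r) c"
    by (simp add: delta2_def der_single)
  also have "\<dots> = (\<Sum>v\<in>{X1 k, X2 l, Q i p r}.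
      Poly_Mapping.single (mon e s k l i p r - Poly_Mapping.single v 1) (c * of_nat (Poly_Mapping.lookup (mon e s k l i p r) v)) * d2var v)"
    by (rule dmon_superset) (use keys_mon in auto)
  also have "\<dots> = ?rhs"
  proof -
    consider "s = 0" | "s = 1" using assms by linarith
    then show ?thesis using mon_X2_shift[of e k l i p r] mon_Q2_shift[of e s k l i p r]
      by cases (auto simp: Bvar_mult)
  qed
  finally show ?thesis .
qed




definition Linv :: "nat \<Rightarrow> nat \<Rightarrow> nat \<Rightarrow> nat \<Rightarrow> (var \<Rightarrow>\<^sub>0 nat) set" where
  "Linv e s K T = {mon e s k l i p r | k l i p r. (e*k, s*l) < (e*K, s*T)}"

lemma LinvI: "(e*k, s*l) < (e*K, s*T) \<Longrightarrow> mon e s k l i p r \<in> Linv e s K T"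
  unfolding Linv_def by blast

lemma keys_add_sub: "Poly_Mapping.keys a \<subseteq> S \<Longrightarrow> Poly_Mapping.keys b \<subseteq> S \<Longrightarrow> Poly_Mapping.keys (a + b) \<subseteq> S"
  using keys_add[of a b] by blast

lemma d2_Linv:
  assumes "e \<le> 1" "s \<le> 1" "Poly_Mapping.keys R \<subseteq> Linv e s K T"
  shows "Poly_Mapping.keys (delta2 R) \<subseteq> Linv e s K (Suc T)"
proof -
  have "Poly_Mapping.keys (dmon d2var m (Poly_Mapping.lookup R m)) \<subseteq> Linv e s K (Suc T)"
    if "m \<in> Poly_Mapping.keys R" for m
  proof -
    from that assms(3) obtain k l i p r where m: "m = mon e s k l i p r" and lt: "(e*k, s*l) < (e*K, s*T)"
      by (auto simp: Linv_def)
    have "dmon d2var m (Poly_Mapping.lookup R m) = delta2 (Poly_Mapping.single m (Poly_Mapping.lookup R m))"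
      by (simp add: delta2_def der_single)
    also have "\<dots> = (if s = 1 then Poly_Mapping.single (mon e s k (Suc l) i p r) (Poly_Mapping.lookup R m) else 0) + Poly_Mapping.single (mon e s k l i p (Suc r)) (Poly_Mapping.lookup R m)"
      unfolding m by (rule d2_mon[OF assms(1,2)])
    finally have eq: "dmon d2var m (Poly_Mapping.lookup R m) = \<dots>" .
    have a: "mon e s k l i p (Suc r) \<in> Linv e s K (Suc T)"
      by (intro LinvI) (use lt assms in \<open>auto simp: less_prod_def le_Suc_eq\<close>)
    have b: "s = 1 \<Longrightarrow> mon e s k (Suc l) i p r \<in> Linv e s K (Suc T)"
      by (intro LinvI) (use lt assms in \<open>auto simp: less_prod_def le_Suc_eq\<close>)
    show ?thesis unfolding eq
      by (rule keys_add_sub) (use a b in auto)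
  qed
  then show ?thesis using keys_der[of d2var R] unfolding delta2_def by blast
qed

lemma d1_Linv:
  assumes "e \<le> 1" "s \<le> 1" "Poly_Mapping.keys R \<subseteq> Linv e s K T"
  shows "Poly_Mapping.keys (delta1 R) \<subseteq> Linv e s (Suc K) T"
proof -
  have "Poly_Mapping.keys (dmon d1var m (Poly_Mapping.lookup R m)) \<subseteq> Linv e s (Suc K) T"
    if "m \<in> Poly_Mapping.keys R" for m
  proof -
    from that assms(3) obtain k l i p r where m: "m = mon e s k l i p r" and lt: "(e*k, s*l) < (e*K, s*T)"
      by (auto simp: Linv_def)
    have "dmon d1var m (Poly_Mapping.lookup R m) = delta1 (Poly_Mapping.single m (Poly_Mapping.lookup R m))"
      by (simp add: delta1_def der_single)
    also have "\<dots> = (if e = 1 then Poly_Mapping.single (mon e s (Suc k) l i p r) (Poly_Mapping.lookup R m) else 0) + Poly_Mapping.single (mon e s k l i (Suc p) r) (Poly_Mapping.lookup R m)"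
      unfolding m by (rule d1_mon[OF assms(1,2)])
    finally have eq: "dmon d1var m (Poly_Mapping.lookup R m) = \<dots>" .
    have a: "mon e s k l i (Suc p) r \<in> Linv e s (Suc K) T"
      by (intro LinvI) (use lt assms in \<open>auto simp: less_prod_def le_Suc_eq\<close>)
    have b: "e = 1 \<Longrightarrow> mon e s (Suc k) l i p r \<in> Linv e s (Suc K) T"
      by (intro LinvI) (use lt assms in \<open>auto simp: less_prod_def le_Suc_eq\<close>)
    show ?thesis unfolding eq
      by (rule keys_add_sub) (use a b in auto)
  qed
  then show ?thesis using keys_der[of d1var R] unfolding delta1_def by blast
qed

lemma delta1_add: "delta1 (p + q) = delta1 p + delta1 q" by (simp add: delta1_def der_add)
lemma delta2_add: "delta2 (p + q) = delta2 p + delta2 q" by (simp add: delta2_def der_add)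

lemma top2:
  assumes "e \<le> 1" "s \<le> 1"
  shows "\<exists>R. (delta2^^T) (Poly_Mapping.single (mon e s 0 0 i p r) 1 :: 'a::comm_ring_1 B) =
     Poly_Mapping.single (mon e s 0 T i p (r + (1-s)*T)) 1 + R \<and> Poly_Mapping.keys R \<subseteq> Linv e s 0 T"
proof (induction T)
  case 0
  then show ?case by (intro exI[of _ 0]) simp
next
  case (Suc T)
  then obtain R :: "'a B" where R: "(delta2^^T) (Poly_Mapping.single (mon e s 0 0 i p r) 1) =
     Poly_Mapping.single (mon e s 0 T i p (r + (1-s)*T)) 1 + R" "Poly_Mapping.keys R \<subseteq> Linv e s 0 T"
    by blast
  have dR: "Poly_Mapping.keys (delta2 R) \<subseteq> Linv e s 0 (Suc T)" by (rule d2_Linv[OF assms R(2)])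
  have eq: "(delta2^^Suc T) (Poly_Mapping.single (mon e s 0 0 i p r) 1) =
    (if s = 1 then Poly_Mapping.single (mon e s 0 (Suc T) i p (r + (1-s)*T)) 1 else 0)
    + Poly_Mapping.single (mon e s 0 T i p (Suc (r + (1-s)*T))) 1 + delta2 R"
    using R(1) by (simp add: delta2_add d2_mon[OF assms])
  show ?case
  proof (cases "s = 1")
    case True
    have m: "mon e s 0 T i p (Suc (r + (1-s)*T)) \<in> Linv e s 0 (Suc T)"
      by (intro LinvI) (use True in \<open>auto simp: less_prod_def\<close>)
    show ?thesis
      apply (rule exI[of _ "Poly_Mapping.single (mon e s 0 T i p (Suc (r + (1-s)*T))) 1 + delta2 R"])
      apply (rule conjI)
      subgoal unfolding eq using True by (simp add: add.assoc)
      subgoal by (rule keys_add_sub) (use m dR in auto)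
      done
  next
    case False
    then have s0: "s = 0" using assms by simp
    have mm: "mon e s 0 T i p (Suc (r + (1-s)*T)) = mon e s 0 (Suc T) i p (r + (1-s)*Suc T)"
      using s0 by (simp add: mon_def)
    show ?thesis
      apply (rule exI[of _ "delta2 R"])
      using eq False mm dR by auto
  qed
qed

lemma top12:
  assumes "e \<le> 1" "s \<le> 1"
  shows "\<exists>R. (delta1^^S) ((delta2^^T) (Poly_Mapping.single (mon e s 0 0 i p r) 1 :: 'a::comm_ring_1 B)) =
     Poly_Mapping.single (mon e s S T i (p + (1-e)*S) (r + (1-s)*T)) 1 + R \<and> Poly_Mapping.keys R \<subseteq> Linv e s S T"
proof (induction S)
  case 0
  then show ?case using top2[OF assms] by simp
next
  case (Suc S)
  then obtain R :: "'a B" where R: "(delta1^^S) ((delta2^^T) (Poly_Mapping.single (mon e s 0 0 i p r) 1)) =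
     Poly_Mapping.single (mon e s S T i (p + (1-e)*S) (r + (1-s)*T)) 1 + R" "Poly_Mapping.keys R \<subseteq> Linv e s S T"
    by blast
  have dR: "Poly_Mapping.keys (delta1 R) \<subseteq> Linv e s (Suc S) T" by (rule d1_Linv[OF assms R(2)])
  have eq: "(delta1^^Suc S) ((delta2^^T) (Poly_Mapping.single (mon e s 0 0 i p r) 1)) =
    (if e = 1 then Poly_Mapping.single (mon e s (Suc S) T i (p + (1-e)*S) (r + (1-s)*T)) 1 else 0)
    + Poly_Mapping.single (mon e s S T i (Suc (p + (1-e)*S)) (r + (1-s)*T)) 1 + delta1 R"
    using R(1) by (simp add: delta1_add d1_mon[OF assms])
  show ?case
  proof (cases "e = 1")
    case True
    have m: "mon e s S T i (Suc (p + (1-e)*S)) (r + (1-s)*T) \<in> Linv e s (Suc S) T"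
      by (intro LinvI) (use True in \<open>auto simp: less_prod_def\<close>)
    show ?thesis
      apply (rule exI[of _ "Poly_Mapping.single (mon e s S T i (Suc (p + (1-e)*S)) (r + (1-s)*T)) 1 + delta1 R"])
      apply (rule conjI)
      subgoal unfolding eq using True by (simp add: add.assoc)
      subgoal by (rule keys_add_sub) (use m dR in auto)
      done
  next
    case False
    then have e0: "e = 0" using assms by simp
    have mm: "mon e s S T i (Suc (p + (1-e)*S)) (r + (1-s)*T) = mon e s (Suc S) T i (p + (1-e)*Suc S) (r + (1-s)*T)"
      using e0 by (simp add: mon_def)
    show ?thesis
      apply (rule exI[of _ "delta1 R"])
      using eq False mm dR by auto
  qed
qed




lemma Bvar_power: "(Bvar v :: 'a::comm_ring_1 B) ^ k = Poly_Mapping.single (Poly_Mapping.single v k) 1"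
proof (induction k)
  case 0 then show ?case by simp
next
  case (Suc k) then show ?case
    by (simp add: Bvar_def mult_single flip: single_add)
qed

definition wm :: "nat \<Rightarrow> nat \<Rightarrow> nat \<Rightarrow> nat \<Rightarrow> var \<Rightarrow>\<^sub>0 nat" where
  "wm e s a b = Poly_Mapping.single (X1 a) (1-e) + Poly_Mapping.single (X2 b) (1-s)"

lemma gcmd_eq: "(gcmd i e s j al be :: 'a::comm_ring_1 B) =
   Poly_Mapping.single (mon e s 0 0 i (1-e) (1-s)) 1 - Poly_Mapping.single (mon e s 0 0 j (nat (int (1 - e) + al)) (nat (int (1 - s) + be))) 1"
  unfolding gcmd_def Bvar_power by (simp add: Bvar_def mult_single mon_def)

lemma funpow_diff1: "(delta1^^n) (p - q) = (delta1^^n) p - (delta1^^n) q"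
  by (induction n) (simp_all add: delta1_def der_diff)
lemma funpow_diff2: "(delta2^^n) (p - q) = (delta2^^n) p - (delta2^^n) q"
  by (induction n) (simp_all add: delta2_def der_diff)

lemma actV_eq: "actV e s a b S T h = Poly_Mapping.single (wm e s a b) 1 * (delta1^^S) ((delta2^^T) h)"
  by (simp add: actV_def Bvar_power mult_single wm_def)

lemma keys_mult_single: "Poly_Mapping.keys (Poly_Mapping.single w 1 * (R :: 'a::comm_ring_1 B)) \<subseteq> (\<lambda>m. w + m) ` Poly_Mapping.keys R"
  using keys_mult[of "Poly_Mapping.single w 1" R] by (auto split: if_splits)

definition w1 :: "var \<Rightarrow> nat \<Rightarrow> nat" where "w1 v k = (case v of X1 i \<Rightarrow> (i + 1) * k | _ \<Rightarrow> 0)"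
definition w2 :: "var \<Rightarrow> nat \<Rightarrow> nat" where "w2 v k = (case v of X2 i \<Rightarrow> (i + 1) * k | _ \<Rightarrow> 0)"

lemma w1_0[simp]: "w1 v 0 = 0" by (simp add: w1_def split: var.split)
lemma w2_0[simp]: "w2 v 0 = 0" by (simp add: w2_def split: var.split)
lemma w1_add: "w1 v (x + y) = w1 v x + w1 v y" by (simp add: w1_def algebra_simps split: var.split)
lemma w2_add: "w2 v (x + y) = w2 v x + w2 v y" by (simp add: w2_def algebra_simps split: var.split)

lemma deg1_super: assumes "finite A" "Poly_Mapping.keys m \<subseteq> A"
  shows "deg1 m = (\<Sum>v\<in>A. w1 v (Poly_Mapping.lookup m v))"
proof -
  have "deg1 m = (\<Sum>v\<in>Poly_Mapping.keys m. w1 v (Poly_Mapping.lookup m v))"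
    by (simp add: deg1_def w1_def)
  also have "\<dots> = (\<Sum>v\<in>A. w1 v (Poly_Mapping.lookup m v))"
    by (rule sum.mono_neutral_left) (use assms in \<open>auto simp: in_keys_iff\<close>)
  finally show ?thesis .
qed
lemma deg2_super: assumes "finite A" "Poly_Mapping.keys m \<subseteq> A"
  shows "deg2 m = (\<Sum>v\<in>A. w2 v (Poly_Mapping.lookup m v))"
proof -
  have "deg2 m = (\<Sum>v\<in>Poly_Mapping.keys m. w2 v (Poly_Mapping.lookup m v))"
    by (simp add: deg2_def w2_def)
  also have "\<dots> = (\<Sum>v\<in>A. w2 v (Poly_Mapping.lookup m v))"
    by (rule sum.mono_neutral_left) (use assms in \<open>auto simp: in_keys_iff\<close>)
  finally show ?thesis .
qed

lemma deg1_add: "deg1 (m + n) = deg1 m + deg1 n"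
proof -
  let ?A = "Poly_Mapping.keys m \<union> Poly_Mapping.keys n"
  have "deg1 (m + n) = (\<Sum>v\<in>?A. w1 v (Poly_Mapping.lookup (m+n) v))"
    by (rule deg1_super) (simp, rule keys_add)
  also have "\<dots> = (\<Sum>v\<in>?A. w1 v (Poly_Mapping.lookup m v)) + (\<Sum>v\<in>?A. w1 v (Poly_Mapping.lookup n v))"
    by (simp add: lookup_add w1_add sum.distrib)
  also have "\<dots> = deg1 m + deg1 n"
    by (simp add: deg1_super[of ?A])
  finally show ?thesis .
qed
lemma deg2_add: "deg2 (m + n) = deg2 m + deg2 n"
proof -
  let ?A = "Poly_Mapping.keys m \<union> Poly_Mapping.keys n"
  have "deg2 (m + n) = (\<Sum>v\<in>?A. w2 v (Poly_Mapping.lookup (m+n) v))"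
    by (rule deg2_super) (simp, rule keys_add)
  also have "\<dots> = (\<Sum>v\<in>?A. w2 v (Poly_Mapping.lookup m v)) + (\<Sum>v\<in>?A. w2 v (Poly_Mapping.lookup n v))"
    by (simp add: lookup_add w2_add sum.distrib)
  also have "\<dots> = deg2 m + deg2 n"
    by (simp add: deg2_super[of ?A])
  finally show ?thesis .
qed

lemma deg1_single: "deg1 (Poly_Mapping.single v k) = w1 v k"
  by (subst deg1_super[of "{v}"]) auto
lemma deg2_single: "deg2 (Poly_Mapping.single v k) = w2 v k"
  by (subst deg2_super[of "{v}"]) auto

lemma Deg_full: "Deg (wm e s a b + mon e s k l i p r) = ((1-e)*(a+1) + e*(k+1), (1-s)*(b+1) + s*(l+1))"
  by (simp add: Deg_def wm_def mon_def deg1_add deg2_add deg1_single deg2_single w1_def w2_def)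

lemma lead_two:
  assumes one: "(1::'a::comm_ring_1) \<noteq> 0" and ne: "m1 \<noteq> m2" and d1: "Deg m1 = D" and d2: "Deg m2 = D"
    and low: "\<forall>m\<in>Poly_Mapping.keys R. Deg m < D"
  shows "lead (Poly_Mapping.single m1 1 - Poly_Mapping.single m2 1 + R :: 'a B) = Poly_Mapping.single m1 1 - Poly_Mapping.single m2 1"
proof -
  define P where "P = (Poly_Mapping.single m1 1 - Poly_Mapping.single m2 1 + R :: 'a B)"
  have lk: "Poly_Mapping.lookup P m = (1 when m1 = m) - (1 when m2 = m)" if "Deg m = D" for m
  proof -
    have "m \<notin> Poly_Mapping.keys R" using low that by auto
    then show ?thesis by (simp add: P_def lookup_add lookup_minus lookup_single in_keys_iff)
  qed
  have m1k: "m1 \<in> Poly_Mapping.keys P" using lk[OF d1] ne one by (simp add: in_keys_iff)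
  have kP: "Poly_Mapping.keys P \<subseteq> {m1, m2} \<union> Poly_Mapping.keys R"
    unfolding P_def using keys_add[of "Poly_Mapping.single m1 1 - Poly_Mapping.single m2 1" R]
      keys_diff[of "Poly_Mapping.single m1 (1::'a)" "Poly_Mapping.single m2 1"] by (auto split: if_splits)
  have mx: "Max (Deg ` Poly_Mapping.keys P) = D"
  proof (rule Max_eqI)
    show "finite (Deg ` Poly_Mapping.keys P)" by simp
    show "y \<le> D" if "y \<in> Deg ` Poly_Mapping.keys P" for y
      using that kP low d1 d2 by (force simp: less_imp_le)
    show "D \<in> Deg ` Poly_Mapping.keys P" using m1k d1 by blast
  qed
  show ?thesis unfolding P_def[symmetric]
  proof (rule poly_mapping_eqI)
    fix m
    show "Poly_Mapping.lookup (lead P) m = Poly_Mapping.lookup (Poly_Mapping.single m1 1 - Poly_Mapping.single m2 1) m"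
    proof (cases "Deg m = D")
      case True
      then show ?thesis using lk[OF True]
        by (auto simp: lead_def lookup_mapp mx lookup_minus lookup_single in_keys_iff when_def)
    next
      case False
      then have "m \<noteq> m1" "m \<noteq> m2" using d1 d2 by auto
      then show ?thesis using False
        by (auto simp: lead_def lookup_mapp mx lookup_minus lookup_single when_def)
    qed
  qed
qed




lemma Q_eq:
  assumes "wm e s a b + mon e s k l i p r = wm e' s' a' b' + mon e' s' k' l' i' p' r'"
  shows "i = i' \<and> p = p' \<and> r = r'"
proof -
  have "Poly_Mapping.lookup (wm e s a b + mon e s k l i p r) (Q i p r) = Poly_Mapping.lookup (wm e' s' a' b' + mon e' s' k' l' i' p' r') (Q i p r)"
    using assms by simp
  then show ?thesis
    by (simp add: wm_def mon_def lookup_add lookup_single when_def split: if_splits)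
qed

lemma X_eq:
  assumes "wm e s a b + mon e s k l i p r = wm e s a' b' + mon e s k' l' i' p' r'" "e \<le> 1" "s \<le> 1"
  shows "(e = 0 \<longrightarrow> a = a') \<and> (e = 1 \<longrightarrow> k = k') \<and> (s = 0 \<longrightarrow> b = b') \<and> (s = 1 \<longrightarrow> l = l')"
proof -
  have h: "Poly_Mapping.lookup (wm e s a b + mon e s k l i p r) v = Poly_Mapping.lookup (wm e s a' b' + mon e s k' l' i' p' r') v" for v
    using assms by simp
  note h1 = h[of "X1 a"] and h2 = h[of "X1 k"] and h3 = h[of "X2 b"] and h4 = h[of "X2 l"]
  show ?thesis
    using h1 h2 h3 h4 assms(2,3)
    by (auto simp: wm_def mon_def lookup_add lookup_single when_def le_Suc_eq split: if_splits)
qed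

lemma Deg_low:
  fixes e s k l S T a b :: nat
  assumes "e \<le> 1" "s \<le> 1" "(e*k, s*l) < (e*S, s*T)"
  shows "((1-e)*(a+1)+e*(k+1), (1-s)*(b+1)+s*(l+1)) < ((1-e)*(a+1)+e*(S+1), (1-s)*(b+1)+s*(T+1))"
proof -
  have "e = 0 \<or> e = 1" "s = 0 \<or> s = 1" using assms by auto
  then show ?thesis using assms(3) by (auto simp: less_prod_def)
qed

lemma low_keys:
  assumes "e \<le> 1" "s \<le> 1" "Poly_Mapping.keys (R :: 'a::comm_ring_1 B) \<subseteq> Linv e s S T"
    and "m \<in> Poly_Mapping.keys (Poly_Mapping.single (wm e s a b) 1 * R)"
  shows "Deg m < ((1-e)*(a+1)+e*(S+1), (1-s)*(b+1)+s*(T+1))"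
proof -
  from assms(4) keys_mult_single[of "wm e s a b" R] obtain m' where "m = wm e s a b + m'" "m' \<in> Linv e s S T"
    using assms(3) by blast
  then obtain k l i p r where "m = wm e s a b + mon e s k l i p r" "(e*k, s*l) < (e*S, s*T)"
    by (auto simp: Linv_def)
  then show ?thesis using Deg_low[OF assms(1,2)] by (simp add: Deg_full)
qed

lemma f_eq:
  assumes wf: "minsky_wf n cmd" and ac: "minsky_acyclic cmd" and c: "cmd i e s = Some (j, al, be)"
    and ea: "e = 1 \<longrightarrow> a = 0" and sb: "s = 1 \<longrightarrow> b = 0" and one: "(1::'a::comm_ring_1) \<noteq> 0"
  shows "lead (actV e s a b S T (gcmd i e s j al be) :: 'a B) =
    Poly_Mapping.single (wm e s a b + mon e s S T i ((1-e)+(1-e)*S) ((1-s)+(1-s)*T)) 1 -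
    Poly_Mapping.single (wm e s a b + mon e s S T j (nat (int (1-e) + al) + (1-e)*S) (nat (int (1-s) + be) + (1-s)*T)) 1"
proof -
  have w: "e \<le> 1" "s \<le> 1" "al \<in> {-1,0,1}" "be \<in> {-1,0,1}" "e = 1 \<longrightarrow> al \<ge> 0" "s = 1 \<longrightarrow> be \<ge> 0"
    using wf c unfolding minsky_wf_def by blast+
  define W where "W = wm e s a b"
  define t1 where "t1 = mon e s S T i ((1-e)+(1-e)*S) ((1-s)+(1-s)*T)"
  define t2 where "t2 = mon e s S T j (nat (int (1-e) + al) + (1-e)*S) (nat (int (1-s) + be) + (1-s)*T)"
  obtain R1 :: "'a B" where R1: "(delta1^^S) ((delta2^^T) (Poly_Mapping.single (mon e s 0 0 i (1-e) (1-s)) 1)) =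
     Poly_Mapping.single t1 1 + R1" "Poly_Mapping.keys R1 \<subseteq> Linv e s S T"
    using top12[OF w(1,2), of S T i "1-e" "1-s"] unfolding t1_def by (auto simp: add.commute)
  obtain R2 :: "'a B" where R2: "(delta1^^S) ((delta2^^T) (Poly_Mapping.single (mon e s 0 0 j (nat (int (1 - e) + al)) (nat (int (1 - s) + be))) 1)) =
     Poly_Mapping.single t2 1 + R2" "Poly_Mapping.keys R2 \<subseteq> Linv e s S T"
    using top12[OF w(1,2), of S T j "nat (int (1 - e) + al)" "nat (int (1 - s) + be)"] unfolding t2_def by (auto simp: add.commute)
  have eq: "(actV e s a b S T (gcmd i e s j al be) :: 'a B) =
     Poly_Mapping.single (W + t1) 1 - Poly_Mapping.single (W + t2) 1 +
     (Poly_Mapping.single W 1 * R1 - Poly_Mapping.single W 1 * R2)"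
  proof -
    have "(actV e s a b S T (gcmd i e s j al be) :: 'a B) = Poly_Mapping.single W 1 *
      ((delta1^^S) ((delta2^^T) (Poly_Mapping.single (mon e s 0 0 i (1-e) (1-s)) 1)) -
       (delta1^^S) ((delta2^^T) (Poly_Mapping.single (mon e s 0 0 j (nat (int (1 - e) + al)) (nat (int (1 - s) + be))) 1)))"
      by (simp only: actV_eq gcmd_eq funpow_diff1 funpow_diff2 W_def)
    also have "\<dots> = Poly_Mapping.single W 1 * ((Poly_Mapping.single t1 1 + R1) - (Poly_Mapping.single t2 1 + R2))"
      by (simp only: R1(1) R2(1))
    also have "\<dots> = Poly_Mapping.single (W + t1) 1 - Poly_Mapping.single (W + t2) 1 +
     (Poly_Mapping.single W 1 * R1 - Poly_Mapping.single W 1 * R2)"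
      by (simp add: algebra_simps mult_single)
    finally show ?thesis .
  qed
  have ne: "W + t1 \<noteq> W + t2"
  proof
    assume "W + t1 = W + t2"
    then have "(1-e)+(1-e)*S = nat (int (1-e) + al) + (1-e)*S \<and> (1-s)+(1-s)*T = nat (int (1-s) + be) + (1-s)*T \<and> i = j"
      using Q_eq unfolding W_def t1_def t2_def by metis
    then have z: "al = 0" "be = 0" "i = j" using w by (auto simp: le_Suc_eq)
    let ?c = "(i, 1-e, 1-s)"
    have "(?c, ?c) \<in> minsky_step cmd"
      unfolding minsky_step_def using c z w(1,2) by (auto simp: le_Suc_eq)
    then show False using ac unfolding minsky_acyclic_def by blast
  qed
  have D1: "Deg (W + t1) = ((1-e)*(a+1)+e*(S+1), (1-s)*(b+1)+s*(T+1))"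
    by (simp add: W_def t1_def Deg_full)
  have D2: "Deg (W + t2) = ((1-e)*(a+1)+e*(S+1), (1-s)*(b+1)+s*(T+1))"
    by (simp add: W_def t2_def Deg_full)
  have low: "\<forall>m\<in>Poly_Mapping.keys (Poly_Mapping.single W 1 * R1 - Poly_Mapping.single W 1 * R2).
     Deg m < ((1-e)*(a+1)+e*(S+1), (1-s)*(b+1)+s*(T+1))"
    using keys_diff[of "Poly_Mapping.single W 1 * R1" "Poly_Mapping.single W 1 * R2"] low_keys[OF w(1,2) R1(2)] low_keys[OF w(1,2) R2(2)] unfolding W_def by blast
  show ?thesis
    unfolding eq using lead_two[OF one ne D1 D2 low] by (simp add: W_def t1_def t2_def)
qed




type_synonym idx = "(nat \<times> nat \<times> nat) \<times> (nat \<times> nat \<times> nat \<times> nat)"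

definition srcF :: "idx \<Rightarrow> var \<Rightarrow>\<^sub>0 nat" where
  "srcF = (\<lambda>((i,e,s),(a,b,S,T)). wm e s a b + mon e s S T i ((1-e)+(1-e)*S) ((1-s)+(1-s)*T))"
definition tgtF :: "(nat \<Rightarrow> nat \<Rightarrow> nat \<Rightarrow> (nat \<times> int \<times> int) option) \<Rightarrow> idx \<Rightarrow> var \<Rightarrow>\<^sub>0 nat" where
  "tgtF cmd = (\<lambda>((i,e,s),(a,b,S,T)). case cmd i e s of Some (j,al,be) \<Rightarrow>
      wm e s a b + mon e s S T j (nat (int (1-e) + al) + (1-e)*S) (nat (int (1-s) + be) + (1-s)*T))"
definition confS :: "idx \<Rightarrow> nat \<times> nat \<times> nat" where
  "confS = (\<lambda>((i,e,s),(a,b,S,T)). (i, (1-e)+(1-e)*S, (1-s)+(1-s)*T))"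
definition confT :: "(nat \<Rightarrow> nat \<Rightarrow> nat \<Rightarrow> (nat \<times> int \<times> int) option) \<Rightarrow> idx \<Rightarrow> nat \<times> nat \<times> nat" where
  "confT cmd = (\<lambda>((i,e,s),(a,b,S,T)). case cmd i e s of Some (j,al,be) \<Rightarrow>
      (j, nat (int (1-e) + al) + (1-e)*S, nat (int (1-s) + be) + (1-s)*T))"

lemma stepB:
  assumes wf: "minsky_wf n cmd" and c: "cmd i e s = Some (j, al, be)"
  shows "((i, (1-e)+(1-e)*S, (1-s)+(1-s)*T), (j, nat (int (1-e) + al) + (1-e)*S, nat (int (1-s) + be) + (1-s)*T)) \<in> minsky_step cmd"
proof -
  have w: "e \<le> 1" "s \<le> 1" "al \<in> {-1,0,1}" "be \<in> {-1,0,1}" "e = 1 \<longrightarrow> al \<ge> 0" "s = 1 \<longrightarrow> be \<ge> 0"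
    using wf c unfolding minsky_wf_def by blast+
  have e: "(if (1-e)+(1-e)*S = 0 then 1 else 0) = e" using w(1) by (auto simp: le_Suc_eq)
  have s: "(if (1-s)+(1-s)*T = 0 then 1 else 0) = s" using w(2) by (auto simp: le_Suc_eq)
  have a1: "int (nat (int (1-e) + al) + (1-e)*S) = int ((1-e)+(1-e)*S) + al"
    using w(1,3,5) by (auto simp: le_Suc_eq)
  have a2: "int (nat (int (1-s) + be) + (1-s)*T) = int ((1-s)+(1-s)*T) + be"
    using w(2,4,6) by (auto simp: le_Suc_eq)
  show ?thesis unfolding minsky_step_def using c e s a1 a2 by auto
qed

lemma inj_src:
  assumes wf: "minsky_wf n cmd" and c: "cmd i e s \<noteq> None" and c': "cmd i' e' s' \<noteq> None"
    and ea: "e = 1 \<longrightarrow> a = 0" and sb: "s = 1 \<longrightarrow> b = 0"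
    and ea': "e' = 1 \<longrightarrow> a' = 0" and sb': "s' = 1 \<longrightarrow> b' = 0"
    and eq: "wm e s a b + mon e s S T i ((1-e)+(1-e)*S) ((1-s)+(1-s)*T) = wm e' s' a' b' + mon e' s' S' T' i' ((1-e')+(1-e')*S') ((1-s')+(1-s')*T')"
  shows "((i,e,s),(a,b,S,T)) = ((i',e',s'),(a',b',S',T'))"
proof -
  have w: "e \<le> 1" "s \<le> 1" "e' \<le> 1" "s' \<le> 1"
    using wf c c' unfolding minsky_wf_def by fastforce+
  from Q_eq[OF eq] have q: "i = i'" "(1-e)+(1-e)*S = (1-e')+(1-e')*S'" "(1-s)+(1-s)*T = (1-s')+(1-s')*T'"
    by auto
  have ee: "e = e'" using q(2) w by (auto simp: le_Suc_eq)
  have ss: "s = s'" using q(3) w by (auto simp: le_Suc_eq)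
  have x: "(e = 0 \<longrightarrow> a = a') \<and> (e = 1 \<longrightarrow> S = S') \<and> (s = 0 \<longrightarrow> b = b') \<and> (s = 1 \<longrightarrow> T = T')"
    using X_eq[of e s a b S T i _ _ a' b' S' T' i'] eq ee ss w by blast
  show ?thesis using x q ee ss w ea sb ea' sb' by (auto simp: le_Suc_eq)
qed

lemma lookup_smul: "Poly_Mapping.lookup (smul c p) m = c * Poly_Mapping.lookup p m"
  by (simp add: smul_def map.rep_eq when_def)

theorem lemma6:
  fixes n :: nat
    and cmd :: "nat \<Rightarrow> nat \<Rightarrow> nat \<Rightarrow> (nat \<times> int \<times> int) option"
  assumes "minsky_wf n cmd"
    and "minsky_acyclic cmd"
  shows "lin_indep_family
     {((i, e, s), (a, b, s1, t)). cmd i e s \<noteq> None \<and> (e = 1 \<longrightarrow> a = 0) \<and> (s = 1 \<longrightarrow> b = 0)}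
     (\<lambda>((i, e, s), (a, b, s1, t)).
        case cmd i e s of Some (j, al, be) \<Rightarrow>
          (lead (actV e s a b s1 t (gcmd i e s j al be)) :: 'a::comm_ring_1 B))"
proof -
  note wf = assms(1) and ac = assms(2)
  define I where "I = ({((i, e, s), (a, b, s1, t)). cmd i e s \<noteq> None \<and> (e = 1 \<longrightarrow> a = 0) \<and> (s = 1 \<longrightarrow> b = (0::nat))} :: idx set)"
  define f where "f = (\<lambda>((i, e, s), (a, b, s1, t)).
        case cmd i e s of Some (j, al, be) \<Rightarrow>
          (lead (actV e s a b s1 t (gcmd i e s j al be)) :: 'a::comm_ring_1 B))"
  show ?thesis unfolding lin_indep_family_def I_def[symmetric] f_def[symmetric]
  proof (rule allI, intro impI)
    fix c :: "idx \<Rightarrow> 'a"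
    assume fin: "finite {k. c k \<noteq> 0}" and sub: "{k. c k \<noteq> 0} \<subseteq> I"
      and sum0: "(\<Sum>k\<in>{k. c k \<noteq> 0}. smul (c k) (f k)) = 0"
    define F where "F = {k. c k \<noteq> 0}"
    show "\<forall>k. c k = 0"
    proof (cases "(1::'a) = 0")
      case True
      then show ?thesis by (metis mult.right_neutral mult_zero_right)
    next
      case one: False
      have fk: "f k = Poly_Mapping.single (srcF k) 1 - Poly_Mapping.single (tgtF cmd k) 1" if "k \<in> I" for k
      proof -
        obtain i e s a b S T where k: "k = ((i,e,s),(a,b,S,T))" by (cases k) auto
        from that obtain j al be where c: "cmd i e s = Some (j,al,be)" and ea: "e = 1 \<longrightarrow> a = 0" and sb: "s = 1 \<longrightarrow> b = 0"
          unfolding I_def k by auto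
        show ?thesis using f_eq[OF wf ac c ea sb one, of S T]
          by (simp add: k f_def srcF_def tgtF_def c)
      qed
      have stp: "(confS k, confT cmd k) \<in> minsky_step cmd" if "k \<in> I" for k
      proof -
        obtain i e s a b S T where k: "k = ((i,e,s),(a,b,S,T))" by (cases k) auto
        from that obtain j al be where c: "cmd i e s = Some (j,al,be)"
          unfolding I_def k by auto
        show ?thesis using stepB[OF wf c, of S T] by (simp add: k confS_def confT_def c)
      qed
      have ct: "confT cmd k' = confS k" if "k \<in> I" "k' \<in> I" "tgtF cmd k' = srcF k" for k k'
      proof -
        obtain i e s a b S T where k: "k = ((i,e,s),(a,b,S,T))" by (cases k) auto
        obtain i' e' s' a' b' S' T' where k': "k' = ((i',e',s'),(a',b',S',T'))" by (cases k') auto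
        from that obtain j al be where c: "cmd i' e' s' = Some (j,al,be)"
          unfolding I_def k' by auto
        show ?thesis using that(3) Q_eq
          by (simp add: k k' confS_def confT_def srcF_def tgtF_def c)
      qed
      have inj: "k = k'" if "k \<in> I" "k' \<in> I" "srcF k = srcF k'" for k k'
      proof -
        obtain i e s a b S T where k: "k = ((i,e,s),(a,b,S,T))" by (cases k) auto
        obtain i' e' s' a' b' S' T' where k': "k' = ((i',e',s'),(a',b',S',T'))" by (cases k') auto
        show ?thesis using that unfolding k k' I_def srcF_def
          by (intro inj_src[OF wf]) auto
      qed
      define r where "r = {(k',k). k \<in> F \<and> k' \<in> F \<and> tgtF cmd k' = srcF k}"
      have fr: "finite r"
        by (rule finite_subset[of _ "F \<times> F"]) (use fin in \<open>auto simp: r_def F_def\<close>)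
      have tr: "(confS x, confS y) \<in> (minsky_step cmd)\<^sup>+" if "(x, y) \<in> r\<^sup>+" for x y
        using that
      proof (induction rule: trancl_induct)
        case (base y)
        then have "x \<in> I" "y \<in> I" "tgtF cmd x = srcF y" using sub by (auto simp: r_def F_def)
        then show ?case using stp ct by (metis r_into_trancl)
      next
        case (step y z)
        then have "y \<in> I" "z \<in> I" "tgtF cmd y = srcF z" using sub by (auto simp: r_def F_def)
        then have "(confS y, confS z) \<in> minsky_step cmd" using stp ct by metis
        with step.IH show ?case by (rule trancl_into_trancl)
      qed
      have acr: "acyclic r"
        unfolding acyclic_def using tr ac unfolding minsky_acyclic_def by blast
      have wfr: "wf r" using finite_acyclic_wf[OF fr acr] .
      show ?thesis
      proof (rule ccontr)
        assume "\<not> (\<forall>k. c k = 0)"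
        then obtain k1 where "k1 \<in> F" by (auto simp: F_def)
        then obtain k0 where k0: "k0 \<in> F" and mn: "\<And>y. (y, k0) \<in> r \<Longrightarrow> y \<notin> F"
          using wfE_min[OF wfr] by metis
        have nt: "tgtF cmd k \<noteq> srcF k0" if "k \<in> F" for k
          using mn[of k] that k0 by (auto simp: r_def)
        have "0 = Poly_Mapping.lookup (\<Sum>k\<in>F. smul (c k) (f k)) (srcF k0)"
          using sum0 by (simp add: F_def)
        also have "\<dots> = (\<Sum>k\<in>F. c k * Poly_Mapping.lookup (f k) (srcF k0))"
          by (simp add: lookup_sum lookup_smul)
        also have "\<dots> = (\<Sum>k\<in>F. if k = k0 then c k else 0)"
        proof (rule sum.cong[OF refl])
          fix k assume kF: "k \<in> F"
          then have kI: "k \<in> I" using sub F_def by auto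
          have k0I: "k0 \<in> I" using sub F_def k0 by auto
          have "srcF k = srcF k0 \<longleftrightarrow> k = k0" using inj[OF kI k0I] by auto
          then show "c k * Poly_Mapping.lookup (f k) (srcF k0) = (if k = k0 then c k else 0)"
            using nt[OF kF] by (simp add: fk[OF kI] lookup_minus lookup_single when_def)
        qed
        also have "\<dots> = c k0" using k0 fin by (simp add: F_def)
        finally show False using k0 by (simp add: F_def)
      qed
    qed
  qed
qed


end
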